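(* Let $p\geq 5$ be a prime. Then $$ \sum_{\substack{1\leq j<k\leq p-1\\ k \text{ even}}}\frac{1}{jk^2}\equiv\frac{5}{8}B_{p-3}\pmod{p} $$ and $$ \sum_{\substack{1\leq j<k\leq p-1\\ k\text{ even}}}\frac{1}{j^2k}\equiv-\frac{3}{8}B_{p-3}\pmod{p}. $$
   Context: $B_n$ denotes the $n$-th Bernoulli number, defined by $\frac{t}{e^t-1}=\sum_{n=0}^{\infty}\frac{B_n}{n!}t^n$. The sums range over pairs of integers $(j,k)$ with $1\le j<k\le p-1$ and $k$ even. Congruences between rational numbers are understood for rationals whose denominators are coprime to $p$: $x\equiv y\pmod{p}$ means $x-y=p r$ with $r$ a rational number whose denominator is not divisible by $p$. *)

theory Defs
  imports Complex_Main "HOL-Computational_Algebra.Primes"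
begin

text \<open>Bernoulli numbers via the standard recurrence equivalent to
  the generating function t/(e^t-1): B_0 = 1 and for n > 0,
  sum over k from 0 to n of (n+1 choose k) B_k = 0.\<close>
fun bernoulli :: "nat \<Rightarrow> rat" where
  "bernoulli n = (if n = 0 then 1 else
     - (\<Sum>k<n. of_nat ((n + 1) choose k) * bernoulli k) / of_nat (n + 1))"

declare bernoulli.simps [simp del]

definition rat_cong :: "rat \<Rightarrow> rat \<Rightarrow> nat \<Rightarrow> bool" where
  "rat_cong x y p \<longleftrightarrow>
     (\<exists>r. x - y = of_nat p * r \<and> \<not> int p dvd snd (quotient_of r))"

end

theory Submission
  imports Defs "HOL-Number_Theory.Number_Theory"
begin

definition pint :: "nat \<Rightarrow> rat \<Rightarrow> bool" where
  "pint p x \<longleftrightarrow> (\<exists>a b. x = of_int a / of_int b \<and> \<not> int p dvd b)"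

definition cg :: "nat \<Rightarrow> nat \<Rightarrow> rat \<Rightarrow> rat \<Rightarrow> bool" where
  "cg p n x y \<longleftrightarrow> (\<exists>r. pint p r \<and> x - y = of_nat p ^ n * r)"

lemma pint_iff_quot:
  assumes "prime p"
  shows "pint p r \<longleftrightarrow> \<not> int p dvd snd (quotient_of r)"
proof
  assume "pint p r"
  then obtain a b where r: "r = of_int a / of_int b" and nb: "\<not> int p dvd b"
    unfolding pint_def by blast
  obtain n d where q: "quotient_of r = (n, d)" by (cases "quotient_of r")
  have b0: "b \<noteq> 0" using nb by auto
  have d0: "d > 0" using q quotient_of_denom_pos by blast
  have cop: "coprime n d" using q quotient_of_coprime by blast
  have "of_int n / of_int d = (of_int a / of_int b :: rat)"
    using quotient_of_div[OF q] r by simp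
  then have "of_int (n * b) = (of_int (a * d) :: rat)"
    using b0 d0 by (simp add: field_simps)
  then have "n * b = a * d" by (simp only: of_int_eq_iff)
  then have "d dvd n * b" by simp
  then have "d dvd b" using cop by (metis coprime_commute coprime_dvd_mult_right_iff)
  then show "\<not> int p dvd snd (quotient_of r)" using q nb by (auto dest: dvd_trans)
next
  assume "\<not> int p dvd snd (quotient_of r)"
  then show "pint p r" unfolding pint_def
    by (metis prod.collapse quotient_of_div)
qed

lemma rat_cong_cg: "prime p \<Longrightarrow> rat_cong x y p \<longleftrightarrow> cg p 1 x y"
  unfolding rat_cong_def cg_def using pint_iff_quot by auto

lemma pint_of_int [simp]: "prime p \<Longrightarrow> pint p (of_int a)"
  unfolding pint_def by (rule exI[of _ a], rule exI[of _ 1]) (auto simp: prime_gt_1_nat)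

lemma pint_of_nat [simp]: "prime p \<Longrightarrow> pint p (of_nat a)"
  using pint_of_int[of p "int a"] by simp

lemma pint_numeral [simp]: "prime p \<Longrightarrow> pint p (numeral a)"
  using pint_of_nat[of p "numeral a"] by simp

lemma pint_0 [simp]: "prime p \<Longrightarrow> pint p 0" and pint_1 [simp]: "prime p \<Longrightarrow> pint p 1"
  using pint_of_nat[of p 0] pint_of_nat[of p 1] by auto

lemma pint_add [intro]: assumes "prime p" "pint p x" "pint p y" shows "pint p (x + y)"
proof -
  obtain a b where x: "x = of_int a / of_int b" "\<not> int p dvd b" using assms unfolding pint_def by blast
  obtain c d where y: "y = of_int c / of_int d" "\<not> int p dvd d" using assms unfolding pint_def by blast
  have "b \<noteq> 0" "d \<noteq> 0" using x y by auto
  then have "x + y = of_int (a * d + c * b) / of_int (b * d)" using x y by (simp add: field_simps)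
  moreover have "\<not> int p dvd b * d" using x y assms(1)
    by (simp add: prime_dvd_mult_iff)
  ultimately show ?thesis unfolding pint_def by blast
qed

lemma pint_mult [intro]: assumes "prime p" "pint p x" "pint p y" shows "pint p (x * y)"
proof -
  obtain a b where x: "x = of_int a / of_int b" "\<not> int p dvd b" using assms unfolding pint_def by blast
  obtain c d where y: "y = of_int c / of_int d" "\<not> int p dvd d" using assms unfolding pint_def by blast
  have "x * y = of_int (a * c) / of_int (b * d)" using x y by simp
  moreover have "\<not> int p dvd b * d" using x y assms(1)
    by (simp add: prime_dvd_mult_iff)
  ultimately show ?thesis unfolding pint_def by blast
qed

lemma pint_uminus [intro]: assumes "pint p x" shows "pint p (- x)"
proof -
  obtain a b where x: "x = of_int a / of_int b" "\<not> int p dvd b" using assms unfolding pint_def by blast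
  have "- x = of_int (- a) / of_int b" using x by simp
  then show ?thesis using x unfolding pint_def by blast
qed

lemma pint_diff [intro]: "prime p \<Longrightarrow> pint p x \<Longrightarrow> pint p y \<Longrightarrow> pint p (x - y)"
  using pint_add[of p x "- y"] pint_uminus[of p y] by simp

lemma pint_div_int [intro]: assumes "prime p" "pint p x" "\<not> int p dvd c" shows "pint p (x / of_int c)"
proof -
  obtain a b where x: "x = of_int a / of_int b" "\<not> int p dvd b" using assms unfolding pint_def by blast
  have "x / of_int c = of_int a / of_int (b * c)" using x by simp
  moreover have "\<not> int p dvd b * c" using x assms
    by (simp add: prime_dvd_mult_iff)
  ultimately show ?thesis unfolding pint_def by blast
qed

lemma pint_div_nat [intro]: "prime p \<Longrightarrow> pint p x \<Longrightarrow> \<not> p dvd c \<Longrightarrow> pint p (x / of_nat c)"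
  using pint_div_int[of p x "int c"] by simp

lemma pint_sum [intro]: "prime p \<Longrightarrow> (\<And>i. i \<in> A \<Longrightarrow> pint p (f i)) \<Longrightarrow> pint p (sum f A)"
proof (induction A rule: infinite_finite_induct)
  case (insert x F)
  then show ?case by (simp add: pint_add)
qed simp_all

lemma pint_power [intro]: "prime p \<Longrightarrow> pint p x \<Longrightarrow> pint p (x ^ n)"
  by (induction n) (simp_all add: pint_mult)

lemma cgI: "pint p r \<Longrightarrow> x - y = of_nat p ^ n * r \<Longrightarrow> cg p n x y"
  unfolding cg_def by blast

lemma cgE: "cg p n x y \<Longrightarrow> (\<And>r. pint p r \<Longrightarrow> x = y + of_nat p ^ n * r \<Longrightarrow> thesis) \<Longrightarrow> thesis"
  unfolding cg_def by (metis add_diff_cancel_left' diff_add_cancel)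

lemma cg_refl [simp]: "prime p \<Longrightarrow> cg p n x x"
  by (rule cgI[of p 0]) simp_all

lemma cg_eq: "prime p \<Longrightarrow> x = y \<Longrightarrow> cg p n x y"
  by simp

lemma cg_sym: "cg p n x y \<Longrightarrow> cg p n y x"
  by (erule cgE, rule cgI[of p "- _"], erule pint_uminus, simp)

lemma cg_trans [trans]: "prime p \<Longrightarrow> cg p n x y \<Longrightarrow> cg p n y z \<Longrightarrow> cg p n x z"
proof -
  assume a: "prime p" "cg p n x y" "cg p n y z"
  obtain r where r: "pint p r" "x = y + of_nat p ^ n * r" using a(2) by (rule cgE)
  obtain s where s: "pint p s" "y = z + of_nat p ^ n * s" using a(3) by (rule cgE)
  show ?thesis
    by (rule cgI[of p "r + s"]) (use a r s in \<open>simp_all add: pint_add distrib_left\<close>)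
qed

lemma cg_add: "prime p \<Longrightarrow> cg p n x y \<Longrightarrow> cg p n u v \<Longrightarrow> cg p n (x + u) (y + v)"
proof -
  assume a: "prime p" "cg p n x y" "cg p n u v"
  obtain r where r: "pint p r" "x = y + of_nat p ^ n * r" using a(2) by (rule cgE)
  obtain s where s: "pint p s" "u = v + of_nat p ^ n * s" using a(3) by (rule cgE)
  show ?thesis
    by (rule cgI[of p "r + s"]) (use a r s in \<open>simp_all add: pint_add distrib_left\<close>)
qed

lemma cg_neg: "cg p n x y \<Longrightarrow> cg p n (- x) (- y)"
proof -
  assume a: "cg p n x y"
  obtain r where r: "pint p r" "x = y + of_nat p ^ n * r" using a by (rule cgE)
  show ?thesis
    by (rule cgI[of p "- r"]) (use r in \<open>simp_all add: pint_uminus\<close>)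
qed

lemma cg_diff: "prime p \<Longrightarrow> cg p n x y \<Longrightarrow> cg p n u v \<Longrightarrow> cg p n (x - u) (y - v)"
  using cg_add[of p n x y "- u" "- v"] cg_neg[of p n u v] by simp

lemma cg_cmult: "prime p \<Longrightarrow> pint p c \<Longrightarrow> cg p n x y \<Longrightarrow> cg p n (c * x) (c * y)"
proof -
  assume a: "prime p" "pint p c" "cg p n x y"
  obtain r where r: "pint p r" "x = y + of_nat p ^ n * r" using a(3) by (rule cgE)
  show ?thesis
    by (rule cgI[of p "c * r"]) (use a r in \<open>simp_all add: pint_mult algebra_simps\<close>)
qed

lemma cg_mult: "prime p \<Longrightarrow> pint p y \<Longrightarrow> pint p u \<Longrightarrow> cg p n x y \<Longrightarrow> cg p n u v \<Longrightarrow> cg p n (x * u) (y * v)"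
proof -
  assume a: "prime p" "pint p y" "pint p u" "cg p n x y" "cg p n u v"
  have "cg p n (u * x) (u * y)" using a cg_cmult by blast
  moreover have "cg p n (y * u) (y * v)" using a cg_cmult by blast
  ultimately show ?thesis using a(1) cg_trans by (simp add: mult.commute)
qed

lemma cg_div: "prime p \<Longrightarrow> \<not> int p dvd c \<Longrightarrow> cg p n x y \<Longrightarrow> cg p n (x / of_int c) (y / of_int c)"
proof -
  assume a: "prime p" "\<not> int p dvd c" "cg p n x y"
  obtain r where r: "pint p r" "x = y + of_nat p ^ n * r" using a(3) by (rule cgE)
  show ?thesis
    by (rule cgI[of p "r / of_int c"]) (use a r in \<open>simp_all add: pint_div_int add_divide_distrib\<close>)
qed

lemma cg_div_nat: "prime p \<Longrightarrow> \<not> p dvd c \<Longrightarrow> cg p n x y \<Longrightarrow> cg p n (x / of_nat c) (y / of_nat c)"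
  using cg_div[of p "int c" n x y] by simp

lemma cg_sum: "prime p \<Longrightarrow> (\<And>i. i \<in> A \<Longrightarrow> cg p n (f i) (g i)) \<Longrightarrow> cg p n (sum f A) (sum g A)"
proof (induction A rule: infinite_finite_induct)
  case (insert x F)
  then show ?case by (simp add: cg_add)
qed simp_all

lemma cg_pint: "prime p \<Longrightarrow> cg p n x y \<Longrightarrow> pint p y \<Longrightarrow> pint p x"
proof -
  assume a: "prime p" "cg p n x y" "pint p y"
  obtain r where r: "pint p r" "x = y + of_nat p ^ n * r" using a(2) by (rule cgE)
  show ?thesis using a r by (simp add: pint_add pint_mult pint_power)
qed

lemma cg_pow: "prime p \<Longrightarrow> pint p x \<Longrightarrow> pint p y \<Longrightarrow> cg p n x y \<Longrightarrow> cg p n (x ^ k) (y ^ k)"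
proof (induction k)
  case (Suc k)
  then show ?case using cg_mult[of p "y" "x ^ k" n x "y ^ k"] by (simp add: pint_power)
qed simp

lemma cg_inverse: "prime p \<Longrightarrow> x \<noteq> 0 \<Longrightarrow> y \<noteq> 0 \<Longrightarrow> pint p (1/x) \<Longrightarrow> pint p (1/y) \<Longrightarrow> cg p n x y \<Longrightarrow> cg p n (1/x) (1/y)"
proof -
  assume a: "prime p" "x \<noteq> 0" "y \<noteq> 0" "pint p (1/x)" "pint p (1/y)" "cg p n x y"
  obtain r where r: "pint p r" "x = y + of_nat p ^ n * r" using a(6) by (rule cgE)
  have "1/x - 1/y = - (x - y) * (1/x) * (1/y)" using a(2,3) by (simp add: field_simps)
  also have "\<dots> = of_nat p ^ n * (- r * (1/x) * (1/y))" using r(2) by simp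
  finally have e: "1/x - 1/y = of_nat p ^ n * (- r * (1/x) * (1/y))" .
  have "pint p (- r * (1/x) * (1/y))" using a(1,4,5) r(1) by (intro pint_mult pint_uminus)
  then show ?thesis using e by (rule cgI)
qed

lemma cg_down: "cg p 2 x y \<Longrightarrow> cg p 1 (x / of_nat p) (y / of_nat p)"
proof -
  assume a: "cg p 2 x y"
  obtain r where r: "pint p r" "x = y + of_nat p ^ 2 * r" using a by (rule cgE)
  show ?thesis
  proof (rule cgI[of p r])
    show "x / of_nat p - y / of_nat p = of_nat p ^ 1 * r"
    proof (cases "p = 0")
      case True then show ?thesis using r by simp
    next
      case False then show ?thesis using r by (simp add: power2_eq_square field_simps)
    qed
  qed (rule r(1))
qed

lemma cg_p_mult: "cg p 1 x y \<Longrightarrow> cg p 2 (of_nat p * x) (of_nat p * y)"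
proof -
  assume a: "cg p 1 x y"
  obtain r where r: "pint p r" "x = y + of_nat p ^ 1 * r" using a by (rule cgE)
  show ?thesis by (rule cgI[of p r]) (use r in \<open>simp_all add: power2_eq_square algebra_simps\<close>)
qed

lemma cg_2_1: "prime p \<Longrightarrow> cg p 2 x y \<Longrightarrow> cg p 1 x y"
proof -
  assume a: "prime p" "cg p 2 x y"
  obtain r where r: "pint p r" "x = y + of_nat p ^ 2 * r" using a(2) by (rule cgE)
  show ?thesis by (rule cgI[of p "of_nat p * r"]) (use a r in \<open>simp_all add: power2_eq_square pint_mult\<close>)
qed

lemma cg_p0: "prime p \<Longrightarrow> cg p 1 (of_nat p) 0"
  unfolding cg_def by (rule exI[of _ 1]) simp

lemma cg_nat_cong: "prime p \<Longrightarrow> [a = b] (mod p) \<Longrightarrow> cg p 1 (of_nat a) (of_nat b)"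
proof -
  assume a: "prime p" "[a = b] (mod p)"
  then have "[int a = int b] (mod int p)" by (simp add: cong_int_iff)
  then have "int p dvd int a - int b" by (simp add: cong_iff_dvd_diff)
  then obtain t where "int a - int b = int p * t" by blast
  then have "of_nat a - of_nat b = of_nat p ^ 1 * (of_int t :: rat)"
    by (metis of_int_diff of_int_mult of_int_of_nat_eq power_one_right)
  then show ?thesis unfolding cg_def using a by (intro exI[of _ "of_int t"]) simp
qed

lemma bern_simp: "bernoulli n = (if n = 0 then 1 else
     - (\<Sum>k<n. of_nat ((n + 1) choose k) * bernoulli k) / of_nat (n + 1))"
  by (rule bernoulli.simps)

lemma bern_0 [simp]: "bernoulli 0 = 1"
  by (simp add: bern_simp)

lemma bern_1: "bernoulli 1 = - 1 / 2"
  by (simp add: bern_simp)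

lemma bern_sum: "(\<Sum>k\<le>L. of_nat (L choose k) * bernoulli k) = bernoulli L + (if L = 1 then 1 else 0)"
proof (cases L)
  case 0 then show ?thesis by simp
next
  case (Suc n)
  show ?thesis
  proof (cases n)
    case 0 then show ?thesis using Suc by (simp add: bern_1)
  next
    case (Suc m)
    have bn: "bernoulli n = - (\<Sum>k<n. of_nat ((n + 1) choose k) * bernoulli k) / of_nat (n + 1)"
      using Suc by (subst bern_simp) simp
    have "(\<Sum>k<n. of_nat ((n + 1) choose k) * bernoulli k) = - of_nat (n + 1) * bernoulli n"
      using bn by (simp add: field_simps del: of_nat_Suc)
    then show ?thesis using \<open>L = Suc n\<close> Suc
      by (simp add: lessThan_Suc_atMost[symmetric] del: of_nat_Suc)
  qed
qed

definition Bp :: "nat \<Rightarrow> rat \<Rightarrow> rat" where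
  "Bp M x = (\<Sum>k\<le>M. of_nat (M choose k) * bernoulli k * x ^ (M - k))"

lemma Bp_0: "Bp M 0 = bernoulli M"
proof -
  have "Bp M 0 = (\<Sum>k\<le>M. if k = M then bernoulli M else 0)"
    unfolding Bp_def by (rule sum.cong) auto
  then show ?thesis by simp
qed

lemma choose_swap:
  assumes "k + i \<le> M"
  shows "(M choose k) * ((M - k) choose i) = (M choose i) * ((M - i) choose k)"
proof -
  have "(M choose (M - i)) * ((M - i) choose k) = (M choose k) * ((M - k) choose (M - i - k))"
    using assms by (intro choose_mult) auto
  moreover have "M choose (M - i) = M choose i" using assms binomial_symmetric[of i M] by simp
  moreover have "(M - k) choose (M - i - k) = (M - k) choose i"
    using assms binomial_symmetric[of i "M - k"] by (simp add: diff_commute add.commute)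
  ultimately show ?thesis by (simp add: mult.commute)
qed

lemma Bp_shift: "Bp M (x + 1) = Bp M x + of_nat M * x ^ (M - 1)"
proof -
  let ?g = "\<lambda>k i. of_nat (M choose k) * of_nat ((M - k) choose i) * bernoulli k * x ^ i"
  have "Bp M (x + 1) = (\<Sum>k\<le>M. of_nat (M choose k) * bernoulli k * (\<Sum>i\<le>M - k. of_nat ((M - k) choose i) * x ^ i))"
    unfolding Bp_def by (simp add: binomial_ring)
  also have "\<dots> = (\<Sum>k\<le>M. \<Sum>i\<in>{i. i \<in> {..M} \<and> k + i \<le> M}. ?g k i)"
  proof (rule sum.cong[OF refl])
    fix k assume "k \<in> {..M}"
    then have "{i. i \<in> {..M} \<and> k + i \<le> M} = {..M - k}" by auto
    then show "of_nat (M choose k) * bernoulli k * (\<Sum>i\<le>M - k. of_nat ((M - k) choose i) * x ^ i) =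
      (\<Sum>i\<in>{i. i \<in> {..M} \<and> k + i \<le> M}. ?g k i)"
      by (simp add: sum_distrib_left mult_ac)
  qed
  also have "\<dots> = (\<Sum>i\<le>M. \<Sum>k\<in>{k. k \<in> {..M} \<and> k + i \<le> M}. ?g k i)"
    by (rule sum.swap_restrict) auto
  also have "\<dots> = (\<Sum>i\<le>M. of_nat (M choose i) * x ^ i * (\<Sum>k\<le>M - i. of_nat ((M - i) choose k) * bernoulli k))"
  proof (rule sum.cong[OF refl])
    fix i assume iM: "i \<in> {..M}"
    then have s: "{k. k \<in> {..M} \<and> k + i \<le> M} = {..M - i}" by auto
    have "(\<Sum>k\<in>{..M - i}. ?g k i) = (\<Sum>k\<le>M - i. of_nat (M choose i) * x ^ i * (of_nat ((M - i) choose k) * bernoulli k))"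
    proof (rule sum.cong[OF refl])
      fix k assume "k \<in> {..M - i}"
      then have "k + i \<le> M" using iM by auto
      then have "of_nat (M choose k) * of_nat ((M - k) choose i) = (of_nat (M choose i) * of_nat ((M - i) choose k) :: rat)"
        using choose_swap by (metis of_nat_mult)
      then show "?g k i = of_nat (M choose i) * x ^ i * (of_nat ((M - i) choose k) * bernoulli k)"
        by (simp add: mult_ac)
    qed
    then show "(\<Sum>k\<in>{k. k \<in> {..M} \<and> k + i \<le> M}. ?g k i) =
       of_nat (M choose i) * x ^ i * (\<Sum>k\<le>M - i. of_nat ((M - i) choose k) * bernoulli k)"
      using s by (simp add: sum_distrib_left)
  qed
  also have "\<dots> = (\<Sum>i\<le>M. of_nat (M choose i) * x ^ i * bernoulli (M - i)) +
                  (\<Sum>i\<le>M. if M - i = 1 then of_nat (M choose i) * x ^ i else 0)"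
    by (simp add: bern_sum sum.distrib[symmetric] distrib_left, rule sum.cong, auto)
  also have "(\<Sum>i\<le>M. of_nat (M choose i) * x ^ i * bernoulli (M - i)) = Bp M x"
    unfolding Bp_def
    by (rule sum.reindex_bij_witness[where i="\<lambda>i. M - i" and j="\<lambda>i. M - i"])
       (auto simp: binomial_symmetric[symmetric] mult_ac)
  also have "(\<Sum>i\<le>M. if M - i = 1 then of_nat (M choose i) * x ^ i else 0) = of_nat M * x ^ (M - 1)"
  proof (cases M)
    case 0 then show ?thesis by simp
  next
    case (Suc m)
    have "(\<Sum>i\<le>M. if M - i = 1 then of_nat (M choose i) * x ^ i else 0) =
          (\<Sum>i\<le>M. if i = m then of_nat (M choose m) * x ^ m else 0)"
      by (rule sum.cong) (auto simp: Suc)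
    then show ?thesis using Suc by simp
  qed
  finally show ?thesis .
qed

lemma faulhaber: "of_nat M * (\<Sum>j<n. of_nat j ^ (M - 1)) = Bp M (of_nat n) - Bp M 0"
proof (induction n)
  case 0 then show ?case by simp
next
  case (Suc n)
  have "Bp M (of_nat (Suc n)) = Bp M (of_nat n) + of_nat M * of_nat n ^ (M - 1)"
    using Bp_shift[of M "of_nat n"] by (simp add: add.commute)
  then show ?case using Suc by (simp add: distrib_left)
qed

lemma bern_pint: "prime p \<Longrightarrow> k \<le> p - 2 \<Longrightarrow> pint p (bernoulli k)"
proof (induction k rule: less_induct)
  case (less k)
  show ?case
  proof (cases "k = 0")
    case True then show ?thesis using less by simp
  next
    case False
    have "pint p (\<Sum>i<k. of_nat ((k + 1) choose i) * bernoulli i)"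
      using less by (intro pint_sum pint_mult) auto
    moreover have "\<not> p dvd (k + 1)"
    proof
      assume "p dvd k + 1"
      then have "p \<le> k + 1" by (intro dvd_imp_le) auto
      then show False using less prime_gt_1_nat[of p] by linarith
    qed
    ultimately have "pint p (- (\<Sum>i<k. of_nat ((k + 1) choose i) * bernoulli i) / of_nat (k + 1))"
      using less by (intro pint_div_nat pint_uminus) auto
    then show ?thesis using False by (subst bern_simp) simp
  qed
qed

lemma not_dvd_small: "prime (p::nat) \<Longrightarrow> 0 < k \<Longrightarrow> k < p \<Longrightarrow> \<not> p dvd k"
proof
  assume "prime p" "0 < k" "k < p" "p dvd k"
  then have "p \<le> k" using dvd_imp_le by blast
  then show False using \<open>k < p\<close> by simp
qed

lemma P3_cong:
  assumes p: "prime p" "p \<ge> 5"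
  shows "cg p 2 (\<Sum>j<p. of_nat j ^ (p - 3)) (of_nat p * bernoulli (p - 3))"
proof -
  define m where "m = p - 4"
  have pm: "p = m + 4" using p by (simp add: m_def)
  let ?M = "Suc (Suc m)"
  let ?P = "(\<Sum>j<p. of_nat j ^ (p - 3)) :: rat"
  define R where "R = (\<Sum>k\<le>m. of_nat (?M choose k) * bernoulli k * of_nat p ^ (m - k))"
  have e3: "p - 3 = Suc m" and e2: "?M - 1 = Suc m" using pm by arith+
  have f: "of_nat ?M * ?P = Bp ?M (of_nat p) - Bp ?M 0"
    using faulhaber[of ?M p] unfolding e3 e2 .
  have "Bp ?M (of_nat p) = (\<Sum>k\<le>m. of_nat (?M choose k) * bernoulli k * of_nat p ^ (?M - k))
        + of_nat ?M * bernoulli (Suc m) * of_nat p + bernoulli ?M"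
    unfolding Bp_def by simp
  also have "(\<Sum>k\<le>m. of_nat (?M choose k) * bernoulli k * of_nat p ^ (?M - k)) = of_nat p ^ 2 * R"
    unfolding R_def sum_distrib_left
  proof (rule sum.cong[OF refl])
    fix k assume "k \<in> {..m}"
    then have "?M - k = Suc (Suc (m - k))" by auto
    then show "of_nat (?M choose k) * bernoulli k * of_nat p ^ (?M - k) =
      of_nat p ^ 2 * (of_nat (?M choose k) * bernoulli k * of_nat p ^ (m - k))"
      by (simp add: power2_eq_square mult_ac)
  qed
  finally have "of_nat ?M * ?P = of_nat p ^ 2 * R + of_nat ?M * (of_nat p * bernoulli (p - 3))"
    using f Bp_0[of ?M] unfolding e3 by (simp add: algebra_simps)
  moreover have "pint p R"
    unfolding R_def using p pm by (intro pint_sum pint_mult pint_power bern_pint) auto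
  ultimately have "cg p 2 (of_nat ?M * ?P) (of_nat ?M * (of_nat p * bernoulli (p - 3)))"
    by (intro cgI[of p R]) simp_all
  moreover have "\<not> p dvd ?M" using p pm by (intro not_dvd_small) auto
  ultimately have "cg p 2 (of_nat ?M * ?P / of_nat ?M) (of_nat ?M * (of_nat p * bernoulli (p - 3)) / of_nat ?M)"
    using p by (intro cg_div_nat) auto
  then show ?thesis by (simp del: of_nat_Suc)
qed

lemma sum_pairs: "(\<Sum>k\<in>{1..2*(h::nat)}. (f k :: 'a::comm_monoid_add)) = (\<Sum>m\<in>{1..h}. f (2*m - 1) + f (2*m))"
proof (induction h)
  case 0 then show ?case by simp
next
  case (Suc h)
  have "{1..2 * Suc h} = insert (2*h+2) (insert (2*h+1) {1..2*h})" by auto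
  then have "(\<Sum>k\<in>{1..2*Suc h}. f k) = f (2*h+2) + (f (2*h+1) + (\<Sum>k\<in>{1..2*h}. f k))"
    by simp
  then show ?case using Suc by (simp add: add_ac)
qed

lemma pint_inv_pow: "prime p \<Longrightarrow> \<not> p dvd k \<Longrightarrow> pint p (1 / of_nat k ^ n)"
proof -
  assume a: "prime p" "\<not> p dvd k"
  then have "\<not> p dvd k ^ n" using prime_dvd_power[of p k n] by auto
  then have "pint p (1 / of_nat (k ^ n))" using a(1) by (intro pint_div_nat) auto
  then show ?thesis by simp
qed

lemma doubling:
  fixes f g :: "nat \<Rightarrow> rat"
  assumes p: "prime p" "p = 2*h+1" and c: "pint p c"
    and hf: "\<And>m. m \<in> {1..h} \<Longrightarrow> f (2*m) = c * f m"
    and hg: "\<And>m. m \<in> {1..h} \<Longrightarrow> g (2*m) = d * g m"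
    and refl: "\<And>k. k \<in> {1..2*h} \<Longrightarrow> cg p 2 (f (p - k)) (f k + of_nat p * g k)"
  shows "cg p 2 ((1 - c) * (\<Sum>k\<in>{1..2*h}. f k)) (of_nat p * (d - c) * (\<Sum>m\<in>{1..h}. g m))"
proof -
  define S where "S = (\<Sum>k\<in>{1..2*h}. f k)"
  define F where "F = (\<Sum>m\<in>{1..h}. f m)"
  define G where "G = (\<Sum>m\<in>{1..h}. g m)"
  have "S = F + (\<Sum>k\<in>{h+1..h+h}. f k)"
    unfolding S_def F_def using sum.ub_add_nat[of 1 h f h] by (simp only: mult_2)
  also have "(\<Sum>k\<in>{h+1..h+h}. f k) = (\<Sum>m\<in>{1..h}. f (p - m))"
    by (rule sum.reindex_bij_witness[where i="\<lambda>k. p - k" and j="\<lambda>m. p - m"]) (auto simp: p)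
  finally have S1: "S = F + (\<Sum>m\<in>{1..h}. f (p - m))" .
  have "cg p 2 (\<Sum>m\<in>{1..h}. f (p - m)) (\<Sum>m\<in>{1..h}. f m + of_nat p * g m)"
    using p by (intro cg_sum refl) auto
  then have "cg p 2 (F + (\<Sum>m\<in>{1..h}. f (p - m))) (F + (\<Sum>m\<in>{1..h}. f m + of_nat p * g m))"
    using cg_add[OF p(1) cg_refl[OF p(1)]] by blast
  moreover have "F + (\<Sum>m\<in>{1..h}. f m + of_nat p * g m) = 2 * F + of_nat p * G"
    by (simp add: F_def G_def sum.distrib sum_distrib_left)
  ultimately have ii: "cg p 2 S (2 * F + of_nat p * G)" using S1 by simp
  have "S = (\<Sum>m\<in>{1..h}. f (2*m - 1) + f (2*m))"
    unfolding S_def by (rule sum_pairs)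
  also have "\<dots> = (\<Sum>m\<in>{1..h}. f (2*m - 1)) + c * F"
    by (simp add: sum.distrib hf F_def sum_distrib_left)
  also have "(\<Sum>m\<in>{1..h}. f (2*m - 1)) = (\<Sum>m\<in>{1..h}. f (p - 2*m))"
    by (rule sum.reindex_bij_witness[where i="\<lambda>m. h + 1 - m" and j="\<lambda>m. h + 1 - m"]) (auto simp: p intro!: arg_cong[of _ _ f])
  finally have S2: "S = (\<Sum>m\<in>{1..h}. f (p - 2*m)) + c * F" .
  have "cg p 2 (\<Sum>m\<in>{1..h}. f (p - 2*m)) (\<Sum>m\<in>{1..h}. f (2*m) + of_nat p * g (2*m))"
    using p by (intro cg_sum refl) auto
  also have "(\<Sum>m\<in>{1..h}. f (2*m) + of_nat p * g (2*m)) = (\<Sum>m\<in>{1..h}. c * f m + of_nat p * (d * g m))"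
    by (rule sum.cong) (simp_all add: hf hg)
  also have "\<dots> = c * F + of_nat p * d * G"
    by (simp add: sum.distrib F_def G_def sum_distrib_left mult_ac)
  finally have i0: "cg p 2 (\<Sum>m\<in>{1..h}. f (p - 2*m)) (c * F + of_nat p * d * G)" .
  have i: "cg p 2 S (2 * c * F + of_nat p * d * G)"
    unfolding S2 using cg_add[OF p(1) i0 cg_refl[OF p(1), of 2 "c * F"]] by (simp add: algebra_simps)
  have "cg p 2 (c * S) (c * (2 * F + of_nat p * G))" using p c ii by (intro cg_cmult) auto
  then have "cg p 2 (S - c * S) ((2 * c * F + of_nat p * d * G) - c * (2 * F + of_nat p * G))"
    using p i by (intro cg_diff) auto
  moreover have "(2 * c * F + of_nat p * d * G) - c * (2 * F + of_nat p * G) = of_nat p * (d - c) * G"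
    by (simp add: algebra_simps)
  ultimately show ?thesis unfolding S_def[symmetric] G_def[symmetric] by (simp add: algebra_simps)
qed

lemma fermat_rat: "prime p \<Longrightarrow> \<not> p dvd m \<Longrightarrow> cg p 1 (of_nat m ^ (p - 1)) 1"
proof -
  assume a: "prime p" "\<not> p dvd m"
  have "[m ^ (p - 1) = 1] (mod p)" using a by (rule fermat_theorem)
  then have "cg p 1 (of_nat (m ^ (p - 1))) (of_nat 1)" using cg_nat_cong[OF a(1)] by blast
  then show ?thesis by simp
qed

lemma not_dvd_two_pow: "prime (p::nat) \<Longrightarrow> odd p \<Longrightarrow> \<not> p dvd 2 ^ n"
proof
  assume a: "prime p" "odd p" "p dvd 2 ^ n"
  then have "p dvd 2" using prime_dvd_power by blast
  then have "p \<le> 2" by (rule dvd_imp_le) simp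
  moreover have "p \<ge> 2" using a(1) prime_ge_2_nat by blast
  ultimately show False using a(2) by simp
qed

lemma pint_inv_two_pow: "prime p \<Longrightarrow> odd p \<Longrightarrow> pint p (1 / 2 ^ n)"
  using pint_inv_pow[of p "2" n] not_dvd_two_pow[of p 1] by simp

lemma pint_inv4: "prime p \<Longrightarrow> odd p \<Longrightarrow> pint p (1 / 4)"
  using pint_inv_two_pow[of p 2] by simp

lemma pint_inv8: "prime p \<Longrightarrow> odd p \<Longrightarrow> pint p (1 / 8)"
  using pint_inv_two_pow[of p 3] by simp

lemma h2_ident0: "(x::rat) \<noteq> 0 \<Longrightarrow> y \<noteq> 0 \<Longrightarrow> 1 / y ^ 2 - (1 / x ^ 2 + (x + y) * (2 / x ^ 3)) = (x + y) ^ 2 * ((x - 2 * y) * (1 / x ^ 3) * (1 / y ^ 2))"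
  by (simp add: field_simps power2_eq_square power3_eq_cube)

lemma h2_ident: "(x::rat) \<noteq> 0 \<Longrightarrow> q - x \<noteq> 0 \<Longrightarrow> 1 / (q - x) ^ 2 - (1 / x ^ 2 + q * (2 / x ^ 3)) = q ^ 2 * ((3 * x - 2 * q) * (1 / x ^ 3) * (1 / (q - x) ^ 2))"
  using h2_ident0[of x "q - x"] by (simp add: algebra_simps)

lemma H2_cong:
  assumes p: "prime p" "p = 2*h+1"
  shows "cg p 1 (3 * (\<Sum>k\<in>{1..2*h}. 1 / of_nat k ^ 2) / of_nat p) (- (\<Sum>m\<in>{1..h}. 1 / of_nat m ^ 3))"
proof -
  let ?f = "\<lambda>k. 1 / (of_nat k ^ 2 :: rat)"
  let ?g = "\<lambda>k. 2 / (of_nat k ^ 3 :: rat)"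
  have "cg p 2 ((1 - 1/4) * (\<Sum>k\<in>{1..2*h}. ?f k)) (of_nat p * (1/8 - 1/4) * (\<Sum>m\<in>{1..h}. ?g m))"
  proof (rule doubling[OF p])
    fix k assume k: "k \<in> {1..2*h}"
    define x where "x = (of_nat k :: rat)"
    define q where "q = (of_nat p :: rat)"
    have kp: "0 < k" "k < p" using k p by auto
    have x0: "x \<noteq> 0" using kp x_def by simp
    have qx: "q - x \<noteq> 0" using kp x_def q_def by simp
    have e: "of_nat (p - k) = q - x" using kp x_def q_def by (simp add: of_nat_diff)
    have id: "1 / (q - x) ^ 2 - (1 / x ^ 2 + q * (2 / x ^ 3)) = q ^ 2 * ((3 * x - 2 * q) * (1 / x ^ 3) * (1 / (q - x) ^ 2))"
      using x0 qx by (rule h2_ident)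
    have pk: "\<not> p dvd k" using kp p(1) not_dvd_small by blast
    have pk2: "\<not> p dvd (p - k)" using kp p(1) not_dvd_small[of p "p - k"] by auto
    have "pint p ((3 * x - 2 * q) * (1 / x ^ 3) * (1 / (q - x) ^ 2))"
      using pint_inv_pow[OF p(1) pk, of 3] pint_inv_pow[OF p(1) pk2, of 2] p(1)
      unfolding x_def q_def e[unfolded x_def q_def, symmetric] by (intro pint_mult pint_diff) auto
    then have c: "cg p 2 (1 / (q - x) ^ 2) (1 / x ^ 2 + q * (2 / x ^ 3))"
      by (rule cgI) (unfold q_def, rule id[unfolded q_def])
    show "cg p 2 (?f (p - k)) (?f k + of_nat p * ?g k)"
      unfolding e using c unfolding x_def q_def .
  next
    show "pint p (1/4)" using p by (intro pint_inv4) auto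
  qed (auto simp: power_mult_distrib)
  then have A: "cg p 2 (4 * ((1 - 1/4) * (\<Sum>k\<in>{1..2*h}. ?f k))) (4 * (of_nat p * (1/8 - 1/4) * (\<Sum>m\<in>{1..h}. ?g m)))"
    using p(1) by (intro cg_cmult) auto
  have s2: "(\<Sum>m\<in>{1..h}. ?g m) = 2 * (\<Sum>m\<in>{1..h}. 1 / of_nat m ^ 3)"
    by (simp add: sum_distrib_left)
  have e1: "4 * ((1 - 1/4) * (\<Sum>k\<in>{1..2*h}. ?f k)) = 3 * (\<Sum>k\<in>{1..2*h}. ?f k)" by simp
  have e2: "4 * (of_nat p * (1/8 - 1/4) * (\<Sum>m\<in>{1..h}. ?g m)) = - (of_nat p * (\<Sum>m\<in>{1..h}. 1 / of_nat m ^ 3))"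
    unfolding s2 by simp
  from A have "cg p 2 (3 * (\<Sum>k\<in>{1..2*h}. ?f k)) (- (of_nat p * (\<Sum>m\<in>{1..h}. 1 / of_nat m ^ 3)))"
    unfolding e1 e2 .
  from cg_down[OF this] show ?thesis using p by simp
qed

lemma binom2:
  assumes p: "prime p" and x: "pint p x" and y: "pint p y"
  shows "cg p 2 ((x + of_nat p * y) ^ Suc e) (x ^ Suc e + of_nat (Suc e) * of_nat p * y * x ^ e)"
proof (induction e)
  case 0 then show ?case using p by simp
next
  case (Suc e)
  obtain r where r: "pint p r" "(x + of_nat p * y) ^ Suc e = x ^ Suc e + of_nat (Suc e) * of_nat p * y * x ^ e + of_nat p ^ 2 * r"
    using Suc.IH by (rule cgE)
  define q where "q = (of_nat p :: rat)"
  define s where "s = x * r + of_nat (Suc e) * y * y * x ^ e + q * y * r"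
  have "(x + q * y) ^ Suc (Suc e) = (x + q * y) * (x ^ Suc e + of_nat (Suc e) * q * y * x ^ e + q ^ 2 * r)"
    using r(2) unfolding q_def by simp
  also have "\<dots> = x ^ Suc (Suc e) + of_nat (Suc (Suc e)) * q * y * x ^ Suc e + q ^ 2 * s"
    unfolding s_def by (simp add: algebra_simps power2_eq_square)
  finally have e: "(x + q * y) ^ Suc (Suc e) - (x ^ Suc (Suc e) + of_nat (Suc (Suc e)) * q * y * x ^ Suc e) = q ^ 2 * s"
    by simp
  have "pint p s" unfolding s_def q_def using p x y r(1)
    by (intro pint_add pint_mult pint_power) auto
  then show ?case using e unfolding q_def by (rule cgI)
qed

lemma Hf_cong:
  assumes p: "prime p" "p = 2*h+1" "p \<ge> 5"
  shows "cg p 1 (\<Sum>m\<in>{1..h}. of_nat m ^ (p - 4)) (- 2 * bernoulli (p - 3))"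
proof -
  let ?f = "\<lambda>k. (of_nat k :: rat) ^ (p - 3)"
  let ?g = "\<lambda>k. - of_nat (p - 3) * (of_nat k :: rat) ^ (p - 4)"
  define c :: rat where "c = 2 ^ (p - 3)"
  define d :: rat where "d = 2 ^ (p - 4)"
  define Hf where "Hf = (\<Sum>m\<in>{1..h}. (of_nat m :: rat) ^ (p - 4))"
  define P where "P = (\<Sum>k\<in>{1..2*h}. ?f k)"
  define q where "q = (of_nat p :: rat)"
  define B where "B = bernoulli (p - 3)"
  have odd_p: "odd p" using p by simp
  have ev: "even (p - 3)" using p by simp
  have od: "odd (p - 4)" using p by simp
  have s34: "Suc (p - 4) = p - 3" using p by simp
  have D: "cg p 2 ((1 - c) * P) (of_nat p * (d - c) * (\<Sum>m\<in>{1..h}. ?g m))"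
    unfolding P_def
  proof (rule doubling[OF p(1,2)])
    show "pint p c" unfolding c_def using p by (intro pint_power) auto
  next
    fix m show "?f (2 * m) = c * ?f m" unfolding c_def by (simp add: power_mult_distrib)
  next
    fix m show "?g (2 * m) = d * ?g m" unfolding d_def by (simp add: power_mult_distrib)
  next
    fix k assume k: "k \<in> {1..2*h}"
    define x where "x = (of_nat k :: rat)"
    have kp: "0 < k" "k < p" using k p by auto
    have e: "of_nat (p - k) = - x + q * 1" using kp x_def q_def by (simp add: of_nat_diff)
    have "cg p 2 ((- x + of_nat p * 1) ^ Suc (p - 4)) ((- x) ^ Suc (p - 4) + of_nat (Suc (p - 4)) * of_nat p * 1 * (- x) ^ (p - 4))"
      using p(1) unfolding x_def by (intro binom2) auto
    also have "(- x) ^ Suc (p - 4) + of_nat (Suc (p - 4)) * of_nat p * 1 * (- x) ^ (p - 4) = ?f k + of_nat p * ?g k"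
      unfolding s34 using ev od unfolding x_def by simp (simp add: algebra_simps)
    finally show "cg p 2 (?f (p - k)) (?f k + of_nat p * ?g k)"
      unfolding e q_def s34 by simp
  qed
  have Geq: "(\<Sum>m\<in>{1..h}. ?g m) = - of_nat (p - 3) * Hf"
    unfolding Hf_def by (simp add: sum_distrib_left)
  from cg_down[OF D] have D1: "cg p 1 ((1 - c) * (P / q)) ((d - c) * (- of_nat (p - 3)) * Hf)"
    unfolding Geq q_def using p by (simp add: mult_ac)
  have Peq: "(\<Sum>j<p. (of_nat j :: rat) ^ (p - 3)) = P"
  proof -
    have "{..<p} = insert 0 {1..2*h}" using p by auto
    then show ?thesis unfolding P_def using p by simp
  qed
  from cg_down[OF P3_cong[OF p(1,3)]] have PB: "cg p 1 (P / q) B"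
    unfolding Peq q_def B_def using p by simp
  have Bp: "pint p B" unfolding B_def using p by (intro bern_pint) auto
  have Pp: "pint p (P / q)" using cg_pint[OF p(1) PB Bp] .
  define t :: rat where "t = 2 ^ (p - 1)"
  have ft: "cg p 1 t 1" unfolding t_def using fermat_rat[of p 2] not_dvd_two_pow[OF p(1) odd_p, of 1] p(1) by simp
  have e1: "p - 1 = (p - 3) + 2" and e2: "p - 1 = (p - 4) + 3" using p by simp_all
  have "t = 2 ^ (p - 3) * 2 ^ 2" unfolding t_def by (subst e1) (rule power_add)
  then have ct: "c = (1/4) * t" unfolding c_def by simp
  have "t = 2 ^ (p - 4) * 2 ^ 3" unfolding t_def by (subst e2) (rule power_add)
  then have dt: "d = (1/8) * t" unfolding d_def by simp
  have i4: "pint p (1/4)" and i8: "pint p (1/8)" using p odd_p by (auto intro: pint_inv4 pint_inv8)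
  have "cg p 1 (1 - (1/4) * t) (1 - (1/4) * 1)"
    using p(1) i4 ft by (intro cg_diff cg_cmult) auto
  then have c1: "cg p 1 (1 - c) (3/4)" unfolding ct by simp
  have "pint p (3 * (1/4))" using p(1) i4 by (intro pint_mult) auto
  then have i34: "pint p (3/4)" by simp
  have L: "cg p 1 ((1 - c) * (P / q)) ((3/4) * B)"
    using p(1) c1 PB Pp i34 by (intro cg_mult) auto
  have "cg p 1 ((1/8) * t - (1/4) * t) ((1/8) * 1 - (1/4) * 1)"
    using p(1) i4 i8 ft by (intro cg_diff cg_cmult) auto
  then have c2: "cg p 1 (d - c) (- 1/8)" unfolding ct dt by simp
  have o3: "of_nat (p - 3) = (of_nat p - 3 :: rat)" using p by (simp add: of_nat_diff)
  have "cg p 1 (of_nat p - 3) (0 - (3::rat))" using cg_diff[OF p(1) cg_p0[OF p(1)] cg_refl[OF p(1)]] .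
  then have "cg p 1 (- (of_nat p - 3)) (- (0 - (3::rat)))" by (rule cg_neg)
  then have c3: "cg p 1 (- of_nat (p - 3)) (3 :: rat)" unfolding o3 by simp
  have c23: "cg p 1 ((d - c) * (- of_nat (p - 3))) ((- 1/8) * 3)"
    using p(1) c2 c3 pint_uminus[OF i8] by (intro cg_mult) auto
  have Hfp: "pint p Hf" unfolding Hf_def using p(1) by (intro pint_sum pint_power) auto
  have "pint p ((- (1/8)) * of_nat 3)" using pint_mult[OF p(1) pint_uminus[OF i8] pint_of_nat[OF p(1), of 3]] .
  then have i38: "pint p ((- 1/8) * 3)" by simp
  have R: "cg p 1 ((d - c) * (- of_nat (p - 3)) * Hf) ((- 1/8) * 3 * Hf)"
    by (rule cg_mult[OF p(1) i38 Hfp c23 cg_refl[OF p(1)]])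
  have M: "cg p 1 ((3/4) * B) ((- 1/8) * 3 * Hf)"
    using cg_trans[OF p(1) cg_trans[OF p(1) cg_sym[OF L] D1] R] .
  have n3: "\<not> p dvd 3" using p by (intro not_dvd_small) auto
  have "pint p (of_nat 8 / of_nat 3)" by (rule pint_div_nat[OF p(1) pint_of_nat[OF p(1)] n3])
  then have "pint p (- (of_nat 8 / of_nat 3))" by (rule pint_uminus)
  then have i83: "pint p (- 8/3)" by simp
  have "cg p 1 ((- 8/3) * ((3/4) * B)) ((- 8/3) * ((- 1/8) * 3 * Hf))"
    by (rule cg_cmult[OF p(1) i83 M])
  then have "cg p 1 (- 2 * B) Hf" by simp
  then show ?thesis unfolding Hf_def B_def by (rule cg_sym)
qed

definition hs :: "nat \<Rightarrow> nat \<Rightarrow> rat" where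
  "hs a n = (\<Sum>j\<in>{1..n}. 1 / of_nat j ^ a)"

definition H11 :: "nat \<Rightarrow> rat" where "H11 n = (\<Sum>k\<in>{1..n}. hs 1 (k - 1) / of_nat k)"
definition H12 :: "nat \<Rightarrow> rat" where "H12 n = (\<Sum>k\<in>{1..n}. hs 1 (k - 1) / of_nat k ^ 2)"
definition H21 :: "nat \<Rightarrow> rat" where "H21 n = (\<Sum>k\<in>{1..n}. hs 2 (k - 1) / of_nat k)"

lemma hs_0 [simp]: "hs a 0 = 0" unfolding hs_def by simp

lemma hs_Suc: "hs a (Suc n) = hs a n + 1 / of_nat (Suc n) ^ a"
  unfolding hs_def by (simp add: add.commute)

lemma prod_sums:
  fixes a b :: "nat \<Rightarrow> rat"
  shows "(\<Sum>k\<in>{1..n}. a k) * (\<Sum>k\<in>{1..n}. b k) =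
    (\<Sum>k\<in>{1..n}. a k * b k) + (\<Sum>k\<in>{1..n}. a k * (\<Sum>j\<in>{1..k-1}. b j)) + (\<Sum>k\<in>{1..n}. b k * (\<Sum>j\<in>{1..k-1}. a j))"
proof (induction n)
  case 0 then show ?case by simp
next
  case (Suc n)
  have s: "\<And>f :: nat \<Rightarrow> rat. (\<Sum>k\<in>{1..Suc n}. f k) = (\<Sum>k\<in>{1..n}. f k) + f (Suc n)"
    by simp
  show ?case unfolding s using Suc by (simp add: algebra_simps)
qed

lemma sq_hs: "hs 1 n ^ 2 = hs 2 n + 2 * H11 n"
proof -
  have "hs 1 n ^ 2 = (\<Sum>k\<in>{1..n}. 1 / of_nat k) * (\<Sum>k\<in>{1..n}. 1 / of_nat k)"
    unfolding hs_def by (simp add: power2_eq_square)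
  also have "\<dots> = hs 2 n + 2 * H11 n"
    unfolding prod_sums hs_def H11_def
    by (simp add: power2_eq_square sum_distrib_left sum_divide_distrib algebra_simps)
  finally show ?thesis .
qed

lemma stuffle: "hs 1 n * hs 2 n = H12 n + H21 n + hs 3 n"
proof -
  have "hs 1 n * hs 2 n = (\<Sum>k\<in>{1..n}. 1 / of_nat k) * (\<Sum>k\<in>{1..n}. 1 / of_nat k ^ 2)"
    unfolding hs_def by simp
  also have "\<dots> = hs 3 n + H21 n + H12 n"
    unfolding prod_sums hs_def H21_def H12_def
    by (simp add: power2_eq_square power3_eq_cube sum_distrib_left sum_divide_distrib algebra_simps)
  finally show ?thesis by simp
qed

lemma hs_rev: "(\<Sum>m\<in>{1..n}. 1 / of_nat (Suc n - m)) = hs 1 n"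
  unfolding hs_def
  by (rule sum.reindex_bij_witness[where i="\<lambda>m. Suc n - m" and j="\<lambda>m. Suc n - m"]) auto

lemma pfrac: "m \<in> {1..n} \<Longrightarrow> 1 / (of_nat (Suc n - m) * of_nat m) =
    (1 / of_nat (Suc n)) * (1 / of_nat m + 1 / (of_nat (Suc n - m) :: rat))"
proof -
  assume m: "m \<in> {1..n}"
  define y where "y = (of_nat (Suc n - m) :: rat)"
  have y: "y = of_nat (Suc n) - of_nat m" using m unfolding y_def by (simp add: of_nat_diff)
  have "y \<noteq> 0" "(of_nat m :: rat) \<noteq> 0" using m unfolding y_def by auto
  then show ?thesis unfolding y_def[symmetric] using y by (simp add: field_simps)
qed

lemma Dsum: "(\<Sum>m\<in>{1..n}. hs 1 (n - m) / of_nat m) = 2 * H11 n"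
proof (induction n)
  case 0 then show ?case by (simp add: H11_def)
next
  case (Suc n)
  have "(\<Sum>m\<in>{1..Suc n}. hs 1 (Suc n - m) / of_nat m) = (\<Sum>m\<in>{1..n}. hs 1 (Suc n - m) / of_nat m)"
    by simp
  also have "\<dots> = (\<Sum>m\<in>{1..n}. hs 1 (n - m) / of_nat m + 1 / (of_nat (Suc n - m) * of_nat m))"
  proof (rule sum.cong[OF refl])
    fix m assume m: "m \<in> {1..n}"
    then have "Suc n - m = Suc (n - m)" by auto
    then show "hs 1 (Suc n - m) / of_nat m = hs 1 (n - m) / of_nat m + 1 / (of_nat (Suc n - m) * of_nat m)"
      by (simp add: hs_Suc add_divide_distrib)
  qed
  also have "\<dots> = (\<Sum>m\<in>{1..n}. hs 1 (n - m) / of_nat m) + (\<Sum>m\<in>{1..n}. 1 / (of_nat (Suc n - m) * of_nat m))"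
    by (rule sum.distrib)
  also have "(\<Sum>m\<in>{1..n}. 1 / (of_nat (Suc n - m) * of_nat m)) = (\<Sum>m\<in>{1..n}. (1 / of_nat (Suc n)) * (1 / of_nat m + 1 / (of_nat (Suc n - m) :: rat)))"
    by (rule sum.cong[OF refl]) (rule pfrac)
  also note Suc.IH
  also have "(\<Sum>m\<in>{1..n}. (1 / of_nat (Suc n)) * (1 / of_nat m + 1 / (of_nat (Suc n - m) :: rat))) = 2 * hs 1 n / of_nat (Suc n)"
  proof -
    have "(\<Sum>m\<in>{1..n}. (1 / of_nat (Suc n)) * (1 / of_nat m + 1 / (of_nat (Suc n - m) :: rat))) =
      (1 / of_nat (Suc n)) * ((\<Sum>m\<in>{1..n}. 1 / of_nat m) + (\<Sum>m\<in>{1..n}. 1 / (of_nat (Suc n - m) :: rat)))"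
      by (simp only: sum_distrib_left[symmetric] sum.distrib)
    also have "(\<Sum>m\<in>{1..n}. 1 / (of_nat m :: rat)) = hs 1 n" unfolding hs_def by simp
    also note hs_rev
    finally show ?thesis by simp
  qed
  finally show ?case by (simp add: H11_def)
qed

lemma inv_neg_pow: "1 / (- x :: rat) ^ a = (- 1) ^ a * (1 / x ^ a)"
  by (cases "even a") simp_all

lemma refl_term:
  assumes p: "prime p" and k: "k \<in> {1..p-1}"
  shows "cg p 1 (1 / of_nat (p - k) ^ a) ((- 1) ^ a * (1 / of_nat k ^ a))"
proof -
  define x where "x = (of_nat k :: rat)"
  define q where "q = (of_nat p :: rat)"
  have kp: "0 < k" "k < p" using k p prime_gt_1_nat[of p] by auto
  have e: "of_nat (p - k) = q - x" using kp unfolding x_def q_def by (simp add: of_nat_diff)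
  have pk: "\<not> p dvd k" using kp p not_dvd_small by blast
  have pk2: "\<not> p dvd (p - k)" using kp p not_dvd_small[of p "p - k"] by auto
  have c1: "cg p 1 (q - x) (- x)" by (rule cgI[of p 1]) (simp_all add: p q_def)
  have c2: "cg p 1 ((q - x) ^ a) ((- x) ^ a)"
    using p c1 unfolding q_def x_def by (intro cg_pow) (auto intro: pint_diff pint_uminus)
  have i1: "pint p (1 / (q - x) ^ a)" using pint_inv_pow[OF p pk2, of a] unfolding e .
  have i2: "pint p (1 / (- x) ^ a)" unfolding inv_neg_pow x_def
    using p pint_inv_pow[OF p pk, of a] by (intro pint_mult pint_power pint_uminus) auto
  have nz1: "(q - x) ^ a \<noteq> 0" using kp unfolding e[symmetric] by simp
  have nz2: "(- x) ^ a \<noteq> 0" using kp unfolding x_def by simp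
  have "cg p 1 (1 / (q - x) ^ a) (1 / (- x) ^ a)" by (rule cg_inverse[OF p nz1 nz2 i1 i2 c2])
  then show ?thesis unfolding e inv_neg_pow x_def .
qed

lemma refl_hs:
  assumes p: "prime p" and k: "k \<le> p - 1"
  shows "cg p 1 (hs a (p - 1 - k)) ((- 1) ^ a * (hs a (p - 1) - hs a k))"
proof -
  have "hs a (p - 1 - k) = (\<Sum>i\<in>{k+1..p-1}. 1 / of_nat (p - i) ^ a)"
    unfolding hs_def
    by (rule sum.reindex_bij_witness[where i="\<lambda>t. p - t" and j="\<lambda>s. p - s"]) (use k in auto)
  moreover have "cg p 1 (\<Sum>i\<in>{k+1..p-1}. 1 / of_nat (p - i) ^ a) (\<Sum>i\<in>{k+1..p-1}. (- 1) ^ a * (1 / of_nat i ^ a))"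
    using p by (intro cg_sum refl_term) auto
  moreover have "hs a (p - 1) = hs a k + (\<Sum>i\<in>{k+1..p-1}. 1 / of_nat i ^ a)"
  proof -
    have "{1..p-1} = {1..k} \<union> {k+1..p-1}" using k by auto
    then show ?thesis unfolding hs_def by (simp add: sum.union_disjoint)
  qed
  ultimately show ?thesis by (simp add: sum_distrib_left)
qed

lemma H_odd_zero:
  assumes p: "prime p" "odd p" and a: "odd a"
  shows "cg p 1 (hs a (p - 1)) 0"
proof -
  have "cg p 1 (hs a (p - 1)) (- hs a (p - 1))" using refl_hs[OF p(1), of 0 a] a by simp
  then have "cg p 1 (hs a (p - 1) + hs a (p - 1)) (- hs a (p - 1) + hs a (p - 1))"
    by (rule cg_add[OF p(1) _ cg_refl[OF p(1)]])
  then have c2: "cg p 1 (2 * hs a (p - 1)) 0" by simp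
  have n2: "\<not> p dvd 2" using not_dvd_two_pow[OF p, of 1] by simp
  have "cg p 1 (2 * hs a (p - 1) / of_nat 2) (0 / of_nat 2)" by (rule cg_div_nat[OF p(1) n2 c2])
  then show ?thesis by simp
qed

lemma H2_zero:
  assumes p: "prime p" "p = 2*h+1" "p \<ge> 5"
  shows "cg p 1 (hs 2 (2*h)) 0"
proof -
  have c: "cg p 1 (3 * hs 2 (2*h) / of_nat p) (- (\<Sum>m\<in>{1..h}. 1 / of_nat m ^ 3))"
    using H2_cong[OF p(1,2)] unfolding hs_def .
  have "pint p (- (\<Sum>m\<in>{1..h}. 1 / of_nat m ^ 3))"
    using p by (intro pint_uminus pint_sum pint_inv_pow not_dvd_small) auto
  then have r: "pint p (3 * hs 2 (2*h) / of_nat p)" using cg_pint[OF p(1) c] by blast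
  have n3: "\<not> p dvd 3" using p by (intro not_dvd_small) auto
  have r3: "pint p (3 * hs 2 (2*h) / of_nat p / of_nat 3)" by (rule pint_div_nat[OF p(1) r n3])
  have "hs 2 (2*h) - 0 = of_nat p ^ 1 * (3 * hs 2 (2*h) / of_nat p / of_nat 3)"
  proof -
    have pn: "(of_nat p :: rat) \<noteq> 0" using p by simp
    then show ?thesis by (simp add: field_simps)
  qed
  then show ?thesis by (rule cgI[OF r3])
qed

lemma hs_pint: "prime p \<Longrightarrow> n < p \<Longrightarrow> pint p (hs a n)"
  unfolding hs_def by (intro pint_sum pint_inv_pow not_dvd_small) auto

lemma id1: "(x::rat) \<noteq> 0 \<Longrightarrow> y \<noteq> 0 \<Longrightarrow> A / x ^ 2 - (- (A * (1 / (x * y)))) = (x + y) ^ 1 * (A * (1 / x ^ 2) * (1 / y))"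
  by (simp add: field_simps power2_eq_square)

lemma id2: "(x::rat) > 0 \<Longrightarrow> y > 0 \<Longrightarrow> A * (1 / (x * y)) = (1 / (x + y)) * (A / x + A / y)"
proof -
  assume a: "x > 0" "y > 0"
  have "A / x + A / y = (x + y) * (A * (1 / (x * y)))" using a by (simp add: field_simps)
  moreover have "x + y \<noteq> 0" using a by simp
  ultimately show ?thesis by simp
qed

lemma H12_cong:
  assumes p: "prime p" "p = 2*h+1" "p \<ge> 5"
  shows "cg p 1 (2 * H12 (2*h)) (- (\<Sum>m\<in>{1..h}. 1 / of_nat m ^ 3))"
proof -
  define N where "N = 2 * h"
  have pN: "p - 1 = N" using p N_def by simp
  define q where "q = (of_nat p :: rat)"
  define T where "T = (\<Sum>k\<in>{1..N}. hs 1 (k - 1) * (1 / (of_nat k * of_nat (p - k))))"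
  have c1: "cg p 1 (H12 N) (- T)"
    unfolding H12_def T_def sum_negf[symmetric]
  proof (rule cg_sum[OF p(1)])
    fix k assume k: "k \<in> {1..N}"
    then have kp: "0 < k" "k < p" using pN by auto
    define x where "x = (of_nat k :: rat)"
    define y where "y = (of_nat (p - k) :: rat)"
    have xy: "x + y = of_nat p" unfolding x_def y_def using kp by (simp add: of_nat_diff)
    have "x \<noteq> 0" "y \<noteq> 0" unfolding x_def y_def using kp by auto
    note e = id1[OF this, of "hs 1 (k - 1)", unfolded xy]
    have pk: "\<not> p dvd k" using kp p(1) not_dvd_small by blast
    have pk2: "\<not> p dvd (p - k)" using kp p(1) not_dvd_small[of p "p - k"] by auto
    have i1: "pint p (1 / x ^ 2)" unfolding x_def using pint_inv_pow[OF p(1) pk, of 2] .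
    have i2: "pint p (1 / y)" unfolding y_def using pint_inv_pow[OF p(1) pk2, of 1] by simp
    have i0: "pint p (hs 1 (k - 1))" using p(1) kp by (intro hs_pint) auto
    have "pint p (hs 1 (k - 1) * (1 / x ^ 2) * (1 / y))"
      by (rule pint_mult[OF p(1) pint_mult[OF p(1) i0 i1] i2])
    from cgI[OF this e] show "cg p 1 (hs 1 (k - 1) / of_nat k ^ 2) (- (hs 1 (k - 1) * (1 / (of_nat k * of_nat (p - k)))))"
      unfolding x_def y_def .
  qed
  have "T = (\<Sum>k\<in>{1..N}. (1 / q) * (hs 1 (k - 1) / of_nat k + hs 1 (k - 1) / of_nat (p - k)))"
    unfolding T_def
  proof (rule sum.cong[OF refl])
    fix k assume k: "k \<in> {1..N}"
    then have kp: "0 < k" "k < p" using pN by auto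
    have xy: "of_nat k + of_nat (p - k) = q" unfolding q_def using kp by (simp add: of_nat_diff)
    show "hs 1 (k - 1) * (1 / (of_nat k * of_nat (p - k))) = (1 / q) * (hs 1 (k - 1) / of_nat k + hs 1 (k - 1) / of_nat (p - k))"
      using id2[of "of_nat k" "of_nat (p - k)" "hs 1 (k - 1)"] kp unfolding xy by simp
  qed
  also have "\<dots> = (1 / q) * (H11 N + (\<Sum>k\<in>{1..N}. hs 1 (k - 1) / of_nat (p - k)))"
    unfolding H11_def by (simp only: sum_distrib_left[symmetric] sum.distrib)
  also have "(\<Sum>k\<in>{1..N}. hs 1 (k - 1) / of_nat (p - k)) = (\<Sum>m\<in>{1..N}. hs 1 (N - m) / of_nat m)"
    by (rule sum.reindex_bij_witness[where i="\<lambda>m. p - m" and j="\<lambda>k. p - k"]) (use pN in auto)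
  also have "\<dots> = 2 * H11 N" by (rule Dsum)
  finally have T: "T = (1 / q) * (3 * H11 N)" by simp
  define H1 where "H1 = hs 1 N"
  define H2 where "H2 = hs 2 N"
  have sq: "H1 ^ 2 = H2 + 2 * H11 N" unfolding H1_def H2_def using sq_hs[of N] by simp
  have qn: "q \<noteq> 0" unfolding q_def using p by simp
  have E: "2 * (- T) = - 3 * (H1 ^ 2 / q) + 3 * H2 / q"
    unfolding T sq using qn by (simp add: field_simps)
  have A: "cg p 1 (2 * H12 N) (2 * (- T))" by (rule cg_cmult[OF p(1) _ c1]) (simp add: p(1))
  have B: "cg p 1 (- 3 * (H1 ^ 2 / q) + 3 * H2 / q) (- 3 * 0 + - (\<Sum>m\<in>{1..h}. 1 / of_nat m ^ 3))"
  proof (rule cg_add[OF p(1)])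
    have op: "odd p" using p(2) by simp
    have "cg p 1 H1 0" unfolding H1_def using H_odd_zero[OF p(1) op, of 1] pN by simp
    then obtain r where r: "pint p r" "H1 = 0 + of_nat p ^ 1 * r" by (rule cgE)
    have "H1 ^ 2 / q - 0 = of_nat p ^ 1 * (r ^ 2)" using r(2) qn unfolding q_def[symmetric]
      by (simp add: power2_eq_square field_simps)
    then have c0: "cg p 1 (H1 ^ 2 / q) 0" by (rule cgI[OF pint_power[OF p(1) r(1)]])
    have "pint p (- 3)" using p(1) by (intro pint_uminus) simp
    from cg_cmult[OF p(1) this c0] show "cg p 1 (- 3 * (H1 ^ 2 / q)) (- 3 * 0)" .
  next
    show "cg p 1 (3 * H2 / q) (- (\<Sum>m\<in>{1..h}. 1 / of_nat m ^ 3))"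
      using H2_cong[OF p(1,2)] unfolding H2_def N_def q_def hs_def .
  qed
  from A have "cg p 1 (2 * H12 N) (- 3 * (H1 ^ 2 / q) + 3 * H2 / q)" unfolding E .
  from cg_trans[OF p(1) this B] show ?thesis unfolding N_def by simp
qed

lemma H21_cong:
  assumes p: "prime p" "p = 2*h+1" "p \<ge> 5"
  shows "cg p 1 (2 * H21 (2*h)) (\<Sum>m\<in>{1..h}. 1 / of_nat m ^ 3)"
proof -
  define N where "N = 2 * h"
  have pN: "p - 1 = N" using p N_def by simp
  have op: "odd p" using p(2) by simp
  have h1: "cg p 1 (hs 1 N) 0" using H_odd_zero[OF p(1) op, of 1] pN by simp
  have h3: "cg p 1 (hs 3 N) 0" using H_odd_zero[OF p(1) op, of 3] pN by simp
  have h2p: "pint p (hs 2 N)" using p pN by (intro hs_pint) auto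
  have h12: "cg p 1 (hs 1 N * hs 2 N) (0 * hs 2 N)" by (rule cg_mult[OF p(1) p(1)[THEN pint_0] h2p h1 cg_refl[OF p(1)]])
  have "2 * H21 N = 2 * (hs 1 N * hs 2 N) - 2 * H12 N - 2 * hs 3 N" using stuffle[of N] by simp
  moreover have "cg p 1 (2 * (hs 1 N * hs 2 N) - 2 * H12 N - 2 * hs 3 N) (2 * 0 - (- (\<Sum>m\<in>{1..h}. 1 / of_nat m ^ 3)) - 2 * 0)"
    using h12 h3 H12_cong[OF p] unfolding N_def
    by (intro cg_diff[OF p(1)] cg_cmult[OF p(1)]) (auto simp: p(1))
  ultimately show ?thesis unfolding N_def by simp
qed

lemma split_pairs:
  fixes f :: "nat \<Rightarrow> rat"
  assumes p: "p = 2*h+1"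
  shows "(\<Sum>k\<in>{1..2*h}. f k) = (\<Sum>m\<in>{1..h}. f (2*m)) + (\<Sum>m\<in>{1..h}. f (p - 2*m))"
proof -
  have "(\<Sum>k\<in>{1..2*h}. f k) = (\<Sum>m\<in>{1..h}. f (2*m - 1)) + (\<Sum>m\<in>{1..h}. f (2*m))"
    unfolding sum_pairs[of f h] by (rule sum.distrib)
  also have "(\<Sum>m\<in>{1..h}. f (2*m - 1)) = (\<Sum>m\<in>{1..h}. f (p - 2*m))"
    by (rule sum.reindex_bij_witness[where i="\<lambda>m. h + 1 - m" and j="\<lambda>m. h + 1 - m"]) (auto simp: p intro!: arg_cong[of _ _ f])
  finally show ?thesis by simp
qed

lemma sum_even_cubes: "(\<Sum>m\<in>{1..h}. 1 / of_nat (2*m) ^ 3) = (1/8) * (\<Sum>m\<in>{1..h}. 1 / (of_nat m ^ 3 :: rat))"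
  by (simp add: sum_distrib_left power_mult_distrib)

lemma E1_cong:
  assumes p: "prime p" "p = 2*h+1" "p \<ge> 5"
  shows "cg p 1 (\<Sum>m\<in>{1..h}. hs 1 (2*m - 1) / of_nat (2*m) ^ 2) (- 5/16 * (\<Sum>m\<in>{1..h}. 1 / of_nat m ^ 3))"
proof -
  define Q where "Q = (\<Sum>m\<in>{1..h}. 1 / (of_nat m ^ 3 :: rat))"
  define F where "F = (\<lambda>k. hs 1 (k - 1) / (of_nat k ^ 2 :: rat))"
  define E where "E = (\<Sum>m\<in>{1..h}. F (2*m))"
  define Od where "Od = (\<Sum>m\<in>{1..h}. F (p - 2*m))"
  have pN: "p - 1 = 2 * h" using p by simp
  have op: "odd p" using p(2) by simp
  have h1: "cg p 1 (hs 1 (p - 1)) 0" using H_odd_zero[OF p(1) op, of 1] by simp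
  have HEO: "H12 (2*h) = E + Od" unfolding H12_def E_def Od_def F_def by (rule split_pairs[OF p(2)])
  have "cg p 1 Od (\<Sum>m\<in>{1..h}. F (2*m) + 1 / of_nat (2*m) ^ 3)"
    unfolding Od_def
  proof (rule cg_sum[OF p(1)])
    fix m assume m: "m \<in> {1..h}"
    define k where "k = 2 * m"
    have kp: "1 \<le> k" "k \<le> p - 1" using m p unfolding k_def by auto
    have e1: "F (p - k) = hs 1 (p - 1 - k) * (1 / of_nat (p - k) ^ 2)"
      unfolding F_def by (simp add: diff_commute)
    have a: "cg p 1 (hs 1 (p - 1 - k)) ((- 1) ^ 1 * (hs 1 (p - 1) - hs 1 k))"
      using refl_hs[OF p(1) kp(2)] .
    have "cg p 1 ((- 1) ^ 1 * (hs 1 (p - 1) - hs 1 k)) ((- 1) ^ 1 * (0 - hs 1 k))"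
      using p(1) h1 by (intro cg_cmult cg_diff) auto
    from cg_trans[OF p(1) a this] have a2: "cg p 1 (hs 1 (p - 1 - k)) (hs 1 k)" by simp
    have b: "cg p 1 (1 / of_nat (p - k) ^ 2) ((- 1) ^ 2 * (1 / of_nat k ^ 2))"
      using refl_term[OF p(1), of k 2] kp by simp
    have yp: "pint p (hs 1 k)" using kp p by (intro hs_pint) auto
    have up: "pint p (1 / of_nat (p - k) ^ 2)" using kp p by (intro pint_inv_pow not_dvd_small) auto
    have "cg p 1 (hs 1 (p - 1 - k) * (1 / of_nat (p - k) ^ 2)) (hs 1 k * ((- 1) ^ 2 * (1 / of_nat k ^ 2)))"
      by (rule cg_mult[OF p(1) yp up a2 b])
    moreover have "hs 1 k * ((- 1) ^ 2 * (1 / of_nat k ^ 2)) = F k + 1 / of_nat k ^ 3"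
    proof -
      have "k = Suc (k - 1)" using kp by simp
      then have "hs 1 k = hs 1 (k - 1) + 1 / of_nat k" using hs_Suc[of 1 "k - 1"] by simp
      then show ?thesis unfolding F_def using kp by (simp add: field_simps power2_eq_square power3_eq_cube)
    qed
    ultimately show "cg p 1 (F (p - 2 * m)) (F (2 * m) + 1 / of_nat (2 * m) ^ 3)"
      unfolding e1[unfolded k_def] k_def by simp
  qed
  then have cO: "cg p 1 Od (E + (1/8) * Q)" unfolding E_def Q_def sum.distrib sum_even_cubes .
  have "cg p 1 (2 * H12 (2*h)) (2 * (E + (E + (1/8) * Q)))"
    unfolding HEO using p(1) cO by (intro cg_cmult cg_add) auto
  from cg_trans[OF p(1) cg_sym[OF this] H12_cong[OF p, folded Q_def]]
  have "cg p 1 (4 * E + (1/4) * Q) (- Q)" by (simp add: algebra_simps)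
  then have "cg p 1 (4 * E + (1/4) * Q - (1/4) * Q) (- Q - (1/4) * Q)"
    using p(1) by (intro cg_diff) auto
  then have "cg p 1 ((1/4) * (4 * E)) ((1/4) * (- Q - (1/4) * Q))"
    using p(1) op by (intro cg_cmult pint_inv4) auto
  then show ?thesis unfolding E_def F_def Q_def by (simp add: algebra_simps)
qed

lemma E2_cong:
  assumes p: "prime p" "p = 2*h+1" "p \<ge> 5"
  shows "cg p 1 (\<Sum>m\<in>{1..h}. hs 2 (2*m - 1) / of_nat (2*m)) (3/16 * (\<Sum>m\<in>{1..h}. 1 / of_nat m ^ 3))"
proof -
  define Q where "Q = (\<Sum>m\<in>{1..h}. 1 / (of_nat m ^ 3 :: rat))"
  define F where "F = (\<lambda>k. hs 2 (k - 1) / (of_nat k :: rat))"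
  define E where "E = (\<Sum>m\<in>{1..h}. F (2*m))"
  define Od where "Od = (\<Sum>m\<in>{1..h}. F (p - 2*m))"
  have pN: "p - 1 = 2 * h" using p by simp
  have op: "odd p" using p(2) by simp
  have h2: "cg p 1 (hs 2 (p - 1)) 0" using H2_zero[OF p] pN by simp
  have HEO: "H21 (2*h) = E + Od" unfolding H21_def E_def Od_def F_def by (rule split_pairs[OF p(2)])
  have "cg p 1 Od (\<Sum>m\<in>{1..h}. F (2*m) + 1 / of_nat (2*m) ^ 3)"
    unfolding Od_def
  proof (rule cg_sum[OF p(1)])
    fix m assume m: "m \<in> {1..h}"
    define k where "k = 2 * m"
    have kp: "1 \<le> k" "k \<le> p - 1" using m p unfolding k_def by auto
    have e1: "F (p - k) = hs 2 (p - 1 - k) * (1 / of_nat (p - k) ^ 1)"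
      unfolding F_def by (simp add: diff_commute)
    have a: "cg p 1 (hs 2 (p - 1 - k)) ((- 1) ^ 2 * (hs 2 (p - 1) - hs 2 k))"
      using refl_hs[OF p(1) kp(2)] .
    have "cg p 1 ((- 1) ^ 2 * (hs 2 (p - 1) - hs 2 k)) ((- 1) ^ 2 * (0 - hs 2 k))"
      using p(1) h2 by (intro cg_cmult cg_diff) auto
    from cg_trans[OF p(1) a this] have a2: "cg p 1 (hs 2 (p - 1 - k)) (- hs 2 k)" by simp
    have b: "cg p 1 (1 / of_nat (p - k) ^ 1) ((- 1) ^ 1 * (1 / of_nat k ^ 1))"
      using refl_term[OF p(1), of k 1] kp by simp
    have yp: "pint p (- hs 2 k)" using kp p by (intro pint_uminus hs_pint) auto
    have up: "pint p (1 / of_nat (p - k) ^ 1)" using kp p by (intro pint_inv_pow not_dvd_small) auto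
    have "cg p 1 (hs 2 (p - 1 - k) * (1 / of_nat (p - k) ^ 1)) (- hs 2 k * ((- 1) ^ 1 * (1 / of_nat k ^ 1)))"
      by (rule cg_mult[OF p(1) yp up a2 b])
    moreover have "- hs 2 k * ((- 1) ^ 1 * (1 / of_nat k ^ 1)) = F k + 1 / of_nat k ^ 3"
    proof -
      have "k = Suc (k - 1)" using kp by simp
      then have "hs 2 k = hs 2 (k - 1) + 1 / of_nat k ^ 2" using hs_Suc[of 2 "k - 1"] by simp
      then show ?thesis unfolding F_def using kp by (simp add: field_simps power2_eq_square power3_eq_cube)
    qed
    ultimately show "cg p 1 (F (p - 2 * m)) (F (2 * m) + 1 / of_nat (2 * m) ^ 3)"
      unfolding e1[unfolded k_def] k_def by simp
  qed
  then have cO: "cg p 1 Od (E + (1/8) * Q)" unfolding E_def Q_def sum.distrib sum_even_cubes .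
  have "cg p 1 (2 * H21 (2*h)) (2 * (E + (E + (1/8) * Q)))"
    unfolding HEO using p(1) cO by (intro cg_cmult cg_add) auto
  from cg_trans[OF p(1) cg_sym[OF this] H21_cong[OF p, folded Q_def]]
  have "cg p 1 (4 * E + (1/4) * Q) Q" by (simp add: algebra_simps)
  then have "cg p 1 (4 * E + (1/4) * Q - (1/4) * Q) (Q - (1/4) * Q)"
    using p(1) by (intro cg_diff) auto
  then have "cg p 1 ((1/4) * (4 * E)) ((1/4) * (Q - (1/4) * Q))"
    using p(1) op by (intro cg_cmult pint_inv4) auto
  then show ?thesis unfolding E_def F_def Q_def by (simp add: algebra_simps)
qed

lemma Q_Hf:
  assumes p: "prime p" "p = 2*h+1" "p \<ge> 5"
  shows "cg p 1 (\<Sum>m\<in>{1..h}. 1 / of_nat m ^ 3) (\<Sum>m\<in>{1..h}. of_nat m ^ (p - 4))"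
proof (rule cg_sum[OF p(1)])
  fix m assume m: "m \<in> {1..h}"
  have mp: "\<not> p dvd m" using m p by (intro not_dvd_small) auto
  have c: "cg p 1 (of_nat m ^ (p - 1)) 1" by (rule fermat_rat[OF p(1) mp])
  have i: "pint p (1 / of_nat m ^ 3)" by (rule pint_inv_pow[OF p(1) mp])
  have "cg p 1 (1 / of_nat m ^ 3 * of_nat m ^ (p - 1)) (1 / of_nat m ^ 3 * 1)"
    by (rule cg_cmult[OF p(1) i c])
  moreover have "1 / of_nat m ^ 3 * of_nat m ^ (p - 1) = (of_nat m ^ (p - 4) :: rat)"
  proof -
    have e: "p - 1 = (p - 4) + 3" using p by simp
    have "(of_nat m :: rat) \<noteq> 0" using m by simp
    then show ?thesis unfolding e power_add by simp
  qed
  ultimately show "cg p 1 (1 / of_nat m ^ 3) (of_nat m ^ (p - 4))" by (simp add: cg_sym)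
qed

lemma target_sum:
  fixes G :: "nat \<Rightarrow> nat \<Rightarrow> rat"
  assumes p: "p = 2*h+1"
  shows "(\<Sum>(j, k) \<in> {(j, k). 1 \<le> j \<and> j < k \<and> k \<le> p - 1 \<and> even k}. G j k) =
         (\<Sum>m\<in>{1..h}. \<Sum>j\<in>{1..2*m-1}. G j (2*m))"
proof -
  have "(\<Sum>(j, k) \<in> {(j, k). 1 \<le> j \<and> j < k \<and> k \<le> p - 1 \<and> even k}. G j k) =
        (\<Sum>(m, j) \<in> (SIGMA m:{1..h}. {1..2*m-1}). G j (2*m))"
    by (rule sum.reindex_bij_witness[where i="\<lambda>(m, j). (j, 2*m)" and j="\<lambda>(j, k). (k div 2, j)"])
       (auto simp: p)
  also have "\<dots> = (\<Sum>m\<in>{1..h}. \<Sum>j\<in>{1..2*m-1}. G j (2*m))"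
    by (rule sum.Sigma[symmetric]) auto
  finally show ?thesis .
qed

theorem lemma2p2:
  fixes p :: nat
  assumes "prime p" and "p \<ge> 5"
  shows "rat_cong
           (\<Sum>(j, k) \<in> {(j, k). 1 \<le> j \<and> j < k \<and> k \<le> p - 1 \<and> even k}.
              1 / (of_nat j * of_nat k ^ 2))
           (5 / 8 * bernoulli (p - 3)) p \<and>
         rat_cong
           (\<Sum>(j, k) \<in> {(j, k). 1 \<le> j \<and> j < k \<and> k \<le> p - 1 \<and> even k}.
              1 / (of_nat j ^ 2 * of_nat k))
           (- 3 / 8 * bernoulli (p - 3)) p"
proof -
  have pr: "prime p" by (rule assms(1))
  have op: "odd p" using assms by (intro prime_odd_nat) auto
  then obtain h where ph: "p = 2*h+1" by (rule oddE)
  have p: "prime p" "p = 2*h+1" "p \<ge> 5" using assms ph by auto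
  define Q where "Q = (\<Sum>m\<in>{1..h}. 1 / (of_nat m ^ 3 :: rat))"
  define B where "B = bernoulli (p - 3)"
  have QB: "cg p 1 Q (- 2 * B)"
    unfolding Q_def B_def using cg_trans[OF pr Q_Hf[OF p] Hf_cong[OF p]] .
  have t1: "(\<Sum>(j, k) \<in> {(j, k). 1 \<le> j \<and> j < k \<and> k \<le> p - 1 \<and> even k}. 1 / (of_nat j * of_nat k ^ 2))
      = (\<Sum>m\<in>{1..h}. hs 1 (2*m - 1) / (of_nat (2*m) ^ 2 :: rat))"
    unfolding target_sum[OF ph] hs_def by (simp add: sum_divide_distrib)
  have t2: "(\<Sum>(j, k) \<in> {(j, k). 1 \<le> j \<and> j < k \<and> k \<le> p - 1 \<and> even k}. 1 / (of_nat j ^ 2 * of_nat k))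
      = (\<Sum>m\<in>{1..h}. hs 2 (2*m - 1) / (of_nat (2*m) :: rat))"
    unfolding target_sum[OF ph] hs_def by (simp add: sum_divide_distrib)
  have i16: "pint p (1 / 16)" using pint_inv_two_pow[OF pr op, of 4] by simp
  have i5: "pint p (- 5 / 16)"
  proof -
    have "pint p (- (5 * (1 / 16)))" using pr i16 by (intro pint_uminus pint_mult) auto
    then show ?thesis by simp
  qed
  have i3: "pint p (3 / 16)"
  proof -
    have "pint p (3 * (1 / 16))" using pr i16 by (intro pint_mult) auto
    then show ?thesis by simp
  qed
  have c1: "cg p 1 (\<Sum>m\<in>{1..h}. hs 1 (2*m - 1) / (of_nat (2*m) ^ 2 :: rat)) (5 / 8 * B)"
  proof -
    have "cg p 1 (- 5/16 * Q) (- 5/16 * (- 2 * B))" by (rule cg_cmult[OF pr i5 QB])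
    from cg_trans[OF pr E1_cong[OF p, folded Q_def] this] show ?thesis by simp
  qed
  have c2: "cg p 1 (\<Sum>m\<in>{1..h}. hs 2 (2*m - 1) / (of_nat (2*m) :: rat)) (- 3 / 8 * B)"
  proof -
    have "cg p 1 (3/16 * Q) (3/16 * (- 2 * B))" by (rule cg_cmult[OF pr i3 QB])
    from cg_trans[OF pr E2_cong[OF p, folded Q_def] this] show ?thesis by simp
  qed
  show ?thesis unfolding t1 t2 rat_cong_cg[OF pr] using c1 c2 unfolding B_def by simp
qed

end
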